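(* Let $\Sigma$ be a finite alphabet, $L \subseteq \Sigma^*$ a regular language, and $\mathcal{B}$ a DFA recognizing $L^\mathsf{R}$ that is not well-behaved. Then $V_L(n) \in \Omega(n)$ and $F_L(n) \in \mathcal{O}(n)\setminus o(n)$.
   Context: $L^\mathsf{R}=\{x^\mathsf{R}:x\in L\}$ (word reversal). A DFA $(Q,\Sigma,q_0,\delta,F)$ is well-behaved if every strongly connected component $C$ (inclusion-maximal set of mutually reachable states) reachable from $q_0$ satisfies: for all $q\in C$ and $u,v\in\Sigma^*$ with $|u|=|v|$ and $\delta(q,u),\delta(q,v)\in C$, $\delta(q,u)\in F\iff\delta(q,v)\in F$. A streaming algorithm is a deterministic (possibly infinite-state) automaton with an injective encoding $\mathrm{enc}$ of states into bit strings. Fixed-size: fix $a\in\Sigma$, $\mathrm{last}_n(a_1\cdots a_m)=a_{m-n+1}\cdots a_m$ if $n\le m$, else $a^{n-m}a_1\cdots a_m$; a fixed-size algorithm is $(\mathcal{A}_n)$ with $\mathcal{A}_n$ accepting $\{w:\mathrm{last}_n(w)\in L\}$, space at $n$ = maximal encoding length of a state of $\mathcal{A}_n$; $F_L(n)$ is the minimum over all such algorithms. Variable-size: over $\overline\Sigma=\Sigma\cup\{\downarrow\}$, $\mathrm{wnd}(\varepsilon)=\varepsilon$, $\mathrm{wnd}(ub)=\mathrm{wnd}(u)b$ ($b\in\Sigma$), $\mathrm{wnd}(u\!\downarrow)=\varepsilon$ if $\mathrm{wnd}(u)=\varepsilon$, $\mathrm{wnd}(u\!\downarrow)=v$ if $\mathrm{wnd}(u)=bv$;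 an algorithm accepts $\{w:\mathrm{wnd}(w)\in L\}$ and has space complexity $v_\mathcal{A}(n)=\max\{|\mathrm{enc}(\mathcal{A}(u'))|: u' \text{ prefix of } u,\ |\mathrm{wnd}(v)|\le n\text{ for all prefixes }v\text{ of }u\}$; $V_L(n)$ is the minimum of $v_\mathcal{A}(n)$ over all such algorithms. *)

theory Defs
  imports Complex_Main "HOL-Library.Extended_Real" "HOL-Library.Sublist"
begin

record ('q,'a) dfa =
  dstates :: "'q set"
  dinit :: 'q
  dtrans :: "'q \<Rightarrow> 'a \<Rightarrow> 'q"
  dfinal :: "'q set"

definition wf_dfa :: "('q,'a) dfa \<Rightarrow> bool" where
  "wf_dfa B \<longleftrightarrow> finite (dstates B) \<and> dinit B \<in> dstates B \<and>
     (\<forall>q\<in>dstates B. \<forall>x. dtrans B q x \<in> dstates B) \<and> dfinal B \<subseteq> dstates B"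

definition dstar :: "('q,'a) dfa \<Rightarrow> 'q \<Rightarrow> 'a list \<Rightarrow> 'q" where
  "dstar B q w = foldl (dtrans B) q w"

definition dlang :: "('q,'a) dfa \<Rightarrow> 'a list set" where
  "dlang B = {w. dstar B (dinit B) w \<in> dfinal B}"

definition regular :: "'a list set \<Rightarrow> bool" where
  "regular L \<longleftrightarrow> (\<exists>B :: (nat,'a) dfa. wf_dfa B \<and> dlang B = L)"

definition reach :: "('q,'a) dfa \<Rightarrow> 'q \<Rightarrow> 'q \<Rightarrow> bool" where
  "reach B p q \<longleftrightarrow> (\<exists>w. dstar B p w = q)"

definition is_scc :: "('q,'a) dfa \<Rightarrow> 'q set \<Rightarrow> bool" where
  "is_scc B C \<longleftrightarrow> C \<subseteq> dstates B \<and> C \<noteq> {} \<and> (\<forall>p\<in>C. \<forall>q\<in>C. reach B p q) \<and>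
     (\<forall>D. C \<subseteq> D \<and> D \<subseteq> dstates B \<and> (\<forall>p\<in>D. \<forall>q\<in>D. reach B p q) \<longrightarrow> D = C)"

definition well_behaved :: "('q,'a) dfa \<Rightarrow> bool" where
  "well_behaved B \<longleftrightarrow>
     (\<forall>C. is_scc B C \<and> (\<exists>q\<in>C. reach B (dinit B) q) \<longrightarrow>
        (\<forall>q\<in>C. \<forall>u v. length u = length v \<and> dstar B q u \<in> C \<and> dstar B q v \<in> C \<longrightarrow>
            (dstar B q u \<in> dfinal B \<longleftrightarrow> dstar B q v \<in> dfinal B)))"

text \<open>Deterministic (possibly infinite-state) automaton with an injective encoding of
  its states into bit strings.\<close>
record ('s,'b) salg =
  sstates :: "'s set"
  sinit :: 's
  strans :: "'s \<Rightarrow> 'b \<Rightarrow> 's"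
  sacc :: "'s set"
  senc :: "'s \<Rightarrow> bool list"

definition wf_salg :: "('s,'b) salg \<Rightarrow> bool" where
  "wf_salg A \<longleftrightarrow> sinit A \<in> sstates A \<and> (\<forall>s\<in>sstates A. \<forall>x. strans A s x \<in> sstates A) \<and>
     sacc A \<subseteq> sstates A \<and> inj_on (senc A) (sstates A)"

definition srun :: "('s,'b) salg \<Rightarrow> 'b list \<Rightarrow> 's" where
  "srun A w = foldl (strans A) (sinit A) w"

definition slang :: "('s,'b) salg \<Rightarrow> 'b list set" where
  "slang A = {w. srun A w \<in> sacc A}"

definition lastn :: "'a \<Rightarrow> nat \<Rightarrow> 'a list \<Rightarrow> 'a list" where
  "lastn a n w = (if n \<le> length w then drop (length w - n) w
                  else replicate (n - length w) a @ w)"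

definition fixed_space :: "('s,'b) salg \<Rightarrow> enat" where
  "fixed_space A = (SUP s\<in>sstates A. enat (length (senc A s)))"

definition F_fixed :: "'a \<Rightarrow> 'a list set \<Rightarrow> nat \<Rightarrow> enat" where
  "F_fixed a L n = (INF A \<in> {A :: (nat,'a) salg. wf_salg A \<and> slang A = {w. lastn a n w \<in> L}}.
                      fixed_space A)"

subsection \<open>Variable-size sliding window model (None encodes the pop symbol)\<close>

fun wstep :: "'a list \<Rightarrow> 'a option \<Rightarrow> 'a list" where
  "wstep v (Some b) = v @ [b]"
| "wstep v None = tl v"

definition wnd :: "'a option list \<Rightarrow> 'a list" where
  "wnd w = foldl wstep [] w"

definition var_space :: "('s,'a option) salg \<Rightarrow> nat \<Rightarrow> enat" where
  "var_space A n = (SUP u \<in> {u. \<forall>v. prefix v u \<longrightarrow> length (wnd v) \<le> n}.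
                      SUP u' \<in> {u'. prefix u' u}. enat (length (senc A (srun A u'))))"

definition V_var :: "'a list set \<Rightarrow> nat \<Rightarrow> enat" where
  "V_var L n = (INF A \<in> {A :: (nat,'a option) salg. wf_salg A \<and> slang A = {w. wnd w \<in> L}}.
                  var_space A n)"

end

theory Submission imports Defs "HOL-Library.Countable" begin

lemma dstar_append: "dstar B q (u@v) = dstar B (dstar B q u) v"
  by (simp add: dstar_def)
lemma dstar_Nil[simp]: "dstar B q [] = q" by (simp add: dstar_def)

lemma foldl_wstep_Some: "foldl wstep w (map Some xs) = w @ xs"
  by (induct xs arbitrary: w) auto
lemma foldl_wstep_None: "foldl wstep w (replicate d None) = drop d w"
  by (induct d arbitrary: w) (auto simp: drop_Suc)
lemma wnd_append: "wnd (u@v) = foldl wstep (wnd u) v" by (simp add: wnd_def)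
lemma wnd_Some: "wnd (map Some xs) = xs" by (simp add: wnd_def foldl_wstep_Some)

lemma srun_append: "srun A (u@v) = foldl (strans A) (srun A u) v"
  by (simp add: srun_def)

lemma card_short: "card {bs::bool list. length bs < M} < 2^M"
proof (induct M)
  case 0 then show ?case by simp
next
  case (Suc M)
  have e: "{bs::bool list. length bs < Suc M} = {bs. length bs < M} \<union> {bs. set bs \<subseteq> UNIV \<and> length bs = M}"
    by auto
  have "card {bs::bool list. set bs \<subseteq> UNIV \<and> length bs = M} = 2^M"
    using card_lists_length_eq[of "UNIV::bool set" M] by simp
  then show ?case unfolding e using card_Un_le[of "{bs::bool list. length bs < M}" "{bs. set bs \<subseteq> UNIV \<and> length bs = M}"] Suc
    by simp
qed

lemma finite_short: "finite {bs::bool list. length bs < M}"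
proof -
  have "{bs::bool list. length bs < M} \<subseteq> {bs. set bs \<subseteq> UNIV \<and> length bs \<le> M}" by auto
  then show ?thesis using finite_lists_length_le[of "UNIV::bool set" M] finite_subset by auto
qed

lemma exists_long:
  fixes e :: "'s \<Rightarrow> bool list"
  assumes "inj_on e S" "2^M \<le> card S"
  shows "\<exists>s\<in>S. M \<le> length (e s)"
proof (rule ccontr)
  assume "\<not> ?thesis"
  then have "e ` S \<subseteq> {bs. length bs < M}" by force
  then have "card (e ` S) \<le> card {bs::bool list. length bs < M}"
    using card_mono finite_short by blast
  moreover have "card (e ` S) = card S" using assms(1) card_image by blast
  ultimately show False using card_short[of M] assms(2) by linarith
qed

lemma many_states:
  fixes f :: "bool list \<Rightarrow> 's" and e :: "'s \<Rightarrow> bool list"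
  assumes "inj_on f {bs. length bs = M}" "inj_on e (f ` {bs. length bs = M})"
  shows "\<exists>bs. length bs = M \<and> M \<le> length (e (f bs))"
proof -
  have "card (f ` {bs. length bs = M}) = card {bs::bool list. length bs = M}"
    using assms(1) card_image by blast
  also have "\<dots> = 2^M" using card_lists_length_eq[of "UNIV::bool set" M] by simp
  finally show ?thesis using exists_long[OF assms(2)] by auto
qed

lemma reach_trans: "reach B p q \<Longrightarrow> reach B q r \<Longrightarrow> reach B p r"
  unfolding reach_def by (metis dstar_append)

lemma not_wb_data:
  assumes "\<not> well_behaved B"
  shows "\<exists>x q al be k. dstar B (dinit B) x = q \<and> dstar B q al = q \<and> dstar B q be = q \<and>
     length al = length be \<and> k \<le> length al \<and> 0 < length al \<and>
     dstar B q (take k al) \<in> dfinal B \<and> dstar B q (take k be) \<notin> dfinal B"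
proof -
  from assms obtain C q0 q u v where C: "is_scc B C" and q0: "q0 \<in> C" "reach B (dinit B) q0"
    and q: "q \<in> C" and uv: "length u = length v" "dstar B q u \<in> C" "dstar B q v \<in> C"
    and d: "\<not> (dstar B q u \<in> dfinal B \<longleftrightarrow> dstar B q v \<in> dfinal B)"
    unfolding well_behaved_def by blast
  have all: "\<forall>p\<in>C. \<forall>r\<in>C. reach B p r" using C unfolding is_scc_def by blast
  have "reach B (dinit B) q" using reach_trans[OF q0(2)] all q0(1) q by blast
  then obtain x where x: "dstar B (dinit B) x = q" unfolding reach_def by blast
  obtain y1 where y1: "dstar B (dstar B q u) y1 = q" using all uv q unfolding reach_def by blast
  obtain y2 where y2: "dstar B (dstar B q v) y2 = q" using all uv q unfolding reach_def by blast
  have lu: "dstar B q (u@y1) = q" using y1 by (simp add: dstar_append)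
  have lv: "dstar B q (v@y2) = q" using y2 by (simp add: dstar_append)
  have uv_ne: "u \<noteq> [] \<or> v \<noteq> []" using d by auto
  show ?thesis
  proof (cases "dstar B q u \<in> dfinal B")
    case True
    then have nv: "dstar B q v \<notin> dfinal B" using d by auto
    show ?thesis
      apply (rule exI[of _ x], rule exI[of _ q], rule exI[of _ "(u@y1)@(v@y2)"],
             rule exI[of _ "(v@y2)@(u@y1)"], rule exI[of _ "length u"])
      using x lu lv True nv uv uv_ne by (auto simp: dstar_append)
  next
    case False
    then have nv: "dstar B q v \<in> dfinal B" using d by auto
    show ?thesis
      apply (rule exI[of _ x], rule exI[of _ q], rule exI[of _ "(v@y2)@(u@y1)"],
             rule exI[of _ "(u@y1)@(v@y2)"], rule exI[of _ "length u"])
      using x lu lv False nv uv uv_ne by (auto simp: dstar_append)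
  qed
qed

lemma lang_iff: "dlang B = rev ` L \<Longrightarrow> (w \<in> L \<longleftrightarrow> dstar B (dinit B) (rev w) \<in> dfinal B)"
proof -
  assume h: "dlang B = rev ` L"
  have "w \<in> L \<longleftrightarrow> rev w \<in> rev ` L" by (metis image_iff rev_rev_ident image_eqI)
  then show ?thesis using h unfolding dlang_def by auto
qed

lemma diff_index: "length bs = length cs \<Longrightarrow> bs \<noteq> cs \<Longrightarrow> \<exists>i<length bs. bs!i \<noteq> cs!i"
  using nth_equalityI by blast

locale blocks =
  fixes B :: "('q,'a) dfa" and L :: "'a list set" and x :: "'a list" and q :: 'q
    and al be :: "'a list" and k P :: nat
  assumes x: "dstar B (dinit B) x = q" and la: "dstar B q al = q" and lb: "dstar B q be = q"
    and P: "length al = P" "length be = P" and k: "k \<le> P" and Ppos: "0 < P"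
    and fa: "dstar B q (take k al) \<in> dfinal B" and fb: "dstar B q (take k be) \<notin> dfinal B"
    and lang: "dlang B = rev ` L"
begin

definition blk :: "bool \<Rightarrow> 'a list" where "blk b = (if b then al else be)"
definition rho :: "bool list \<Rightarrow> 'a list" where "rho bs = concat (map blk bs)"

lemma blk_loop: "dstar B q (blk b) = q" using la lb by (simp add: blk_def)
lemma blk_len[simp]: "length (blk b) = P" using P by (simp add: blk_def)

lemma rho_loop: "dstar B q (rho bs) = q"
  by (induct bs) (auto simp: rho_def dstar_append blk_loop)

lemma rho_len[simp]: "length (rho bs) = length bs * P"
  by (induct bs) (auto simp: rho_def)

lemma take_rho: assumes "i < length bs" "j \<le> P"
  shows "take (i*P+j) (rho bs) = rho (take i bs) @ take j (blk (bs!i))"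
proof -
  have bs: "bs = take i bs @ bs!i # drop (Suc i) bs" using assms(1) by (simp add: id_take_nth_drop)
  have r: "rho bs = rho (take i bs) @ blk (bs!i) @ rho (drop (Suc i) bs)"
    by (subst bs) (simp add: rho_def)
  have l: "length (rho (take i bs)) = i*P" using assms(1) by simp
  have "take (length (rho (take i bs)) + j) (rho bs) = rho (take i bs) @ take j (blk (bs!i) @ rho (drop (Suc i) bs))"
    unfolding r by (simp only: take_add) simp
  then show ?thesis using l assms by (simp add: min_def)
qed

lemma test: assumes "i < length bs"
  shows "dstar B q (take (i*P+k) (rho bs)) \<in> dfinal B \<longleftrightarrow> bs!i"
  using take_rho[OF assms k] fa fb by (simp add: dstar_append rho_loop blk_def)

lemma test_full: assumes "i < length bs" "dstar B (dinit B) y = q"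
  shows "(rev (take (i*P+k) (rho bs)) @ rev y) \<in> L \<longleftrightarrow> bs!i"
  using test[OF assms(1)] lang_iff[OF lang] assms(2) by (simp add: dstar_append)


lemma srun_in: "wf_salg A \<Longrightarrow> srun A w \<in> sstates A"
  by (induct w rule: rev_induct) (auto simp: srun_def wf_salg_def)

lemma var_inj: assumes "slang A = {w. wnd w \<in> L}"
  shows "inj_on (\<lambda>bs. srun A (map Some (rev (rho bs)))) {bs. length bs = M}"
proof (rule inj_onI, rule ccontr)
  fix bs cs assume bs: "bs \<in> {bs. length bs = M}" and cs: "cs \<in> {bs. length bs = M}"
    and eq: "srun A (map Some (rev (rho bs))) = srun A (map Some (rev (rho cs)))" and ne: "bs \<noteq> cs"
  obtain i where i: "i < M" "bs!i \<noteq> cs!i" using diff_index[of bs cs] bs cs ne by auto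
  define d where "d = M*P - (i*P+k)"
  define e where "e = replicate d None @ map Some (rev x)"
  have le: "i*P+k \<le> M*P"
  proof -
    have "Suc i * P \<le> M * P" using i(1) by (intro mult_right_mono) auto
    then show ?thesis using k by simp
  qed
  have mem: "map Some (rev (rho ds)) @ e \<in> slang A \<longleftrightarrow> ds!i" if "length ds = M" for ds
  proof -
    have "wnd (map Some (rev (rho ds)) @ e) = drop d (rev (rho ds)) @ rev x"
      by (simp add: e_def wnd_append wnd_Some foldl_wstep_None foldl_wstep_Some)
    also have "drop d (rev (rho ds)) = rev (take (i*P+k) (rho ds))"
      using le that by (simp add: rev_take d_def)
    finally show ?thesis using assms test_full[of i ds x] that i(1) x by simp
  qed
  have "map Some (rev (rho bs)) @ e \<in> slang A \<longleftrightarrow> map Some (rev (rho cs)) @ e \<in> slang A"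
    unfolding slang_def using eq by (simp add: srun_append)
  then show False using mem bs cs i(2) by auto
qed

lemma var_bound: assumes "wf_salg A" "slang A = {w. wnd w \<in> L}" "M*P \<le> n"
  shows "enat M \<le> var_space A n"
proof -
  have inj2: "inj_on (senc A) ((\<lambda>bs. srun A (map Some (rev (rho bs)))) ` {bs. length bs = M})"
    using assms(1) srun_in[OF assms(1)] unfolding wf_salg_def by (auto intro: inj_on_subset)
  obtain bs where bs: "length bs = M" "M \<le> length (senc A (srun A (map Some (rev (rho bs)))))"
    using many_states[OF var_inj[OF assms(2)] inj2] by blast
  define u where "u = map Some (rev (rho bs))"
  have pre: "\<forall>v. prefix v u \<longrightarrow> length (wnd v) \<le> n"
  proof (intro allI impI)
    fix v assume "prefix v u"
    then obtain zs where "u = v @ zs" by (auto simp: prefix_def)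
    then have "v = take (length v) u" by simp
    then have "v = map Some (take (length v) (rev (rho bs)))" by (simp add: u_def take_map)
    then have "wnd v = take (length v) (rev (rho bs))" by (metis wnd_Some)
    then show "length (wnd v) \<le> n" using assms(3) bs(1) by simp
  qed
  have "enat M \<le> enat (length (senc A (srun A u)))" using bs(2) by (simp add: u_def)
  also have "\<dots> \<le> (SUP u'\<in>{u'. prefix u' u}. enat (length (senc A (srun A u'))))"
    by (rule SUP_upper) simp
  also have "\<dots> \<le> var_space A n" unfolding var_space_def
    by (rule SUP_upper) (use pre in simp)
  finally show ?thesis .
qed


lemma pow_loop: "dstar B q (concat (replicate j al)) = q"
  by (induct j) (auto simp: dstar_append la)

lemma fixed_inj: assumes "slang A = {w. lastn a n w \<in> L}" "n = length x + k + M*P"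
  shows "inj_on (\<lambda>bs. srun A (rev (rho bs @ replicate (length x + k) a))) {bs. length bs = M}"
proof (rule inj_onI, rule ccontr)
  fix bs cs assume bs: "bs \<in> {bs. length bs = M}" and cs: "cs \<in> {bs. length bs = M}"
    and eq: "srun A (rev (rho bs @ replicate (length x + k) a)) = srun A (rev (rho cs @ replicate (length x + k) a))"
    and ne: "bs \<noteq> cs"
  obtain i where i: "i < M" "bs!i \<noteq> cs!i" using diff_index[of bs cs] bs cs ne by auto
  define y where "y = x @ concat (replicate (M - i) al)"
  have ly: "length y = length x + (M-i)*P" using P by (simp add: y_def length_concat sum_list_replicate)
  have le: "i*P+k \<le> M*P"
  proof -
    have "Suc i * P \<le> M * P" using i(1) by (intro mult_right_mono) auto
    then show ?thesis using k by simp
  qed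
  have ly2: "n - length y = i*P+k"
  proof -
    have "(M-i)*P + i*P = M*P" using i(1) by (metis add_mult_distrib le_add_diff_inverse2 less_imp_le)
    then show ?thesis using assms(2) ly by simp
  qed
  have yq: "dstar B (dinit B) y = q" by (simp add: y_def dstar_append x pow_loop)
  have mem: "rev (rho ds @ replicate (length x + k) a) @ rev y \<in> slang A \<longleftrightarrow> ds!i" if "length ds = M" for ds
  proof -
    let ?W = "rev (rho ds @ replicate (length x + k) a)"
    have lW: "length ?W = n" using that assms(2) by simp
    have yn: "length y \<le> n" using ly assms(2) by (simp add: diff_mult_distrib)
    have "lastn a n (?W @ rev y) = drop (length y) (?W @ rev y)"
      unfolding lastn_def using lW by (simp only: length_append length_rev) simp
    also have "\<dots> = drop (length y) ?W @ rev y"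
      using yn lW by (simp only: drop_append) simp
    also have "drop (length y) ?W = rev (take (i*P+k) (rho ds @ replicate (length x + k) a))"
    proof -
      have "rev (take (i*P+k) (rho ds @ replicate (length x + k) a)) = drop (n - (i*P+k)) ?W"
        using lW by (simp only: rev_take length_rev)
      moreover have "n - (i*P+k) = length y" using ly2 yn by simp
      ultimately show ?thesis by simp
    qed
    also have "take (i*P+k) (rho ds @ replicate (length x + k) a) = take (i*P+k) (rho ds)"
      using le that by simp
    finally show ?thesis using assms(1) test_full[of i ds y] that i(1) yq by simp
  qed
  have "rev (rho bs @ replicate (length x + k) a) @ rev y \<in> slang A \<longleftrightarrow> rev (rho cs @ replicate (length x + k) a) @ rev y \<in> slang A"
    unfolding slang_def using eq by (simp add: srun_append)
  then show False using mem bs cs i(2) by auto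
qed

lemma fixed_bound: assumes "wf_salg A" "slang A = {w. lastn a n w \<in> L}" "n = length x + k + M*P"
  shows "enat M \<le> fixed_space A"
proof -
  have inj2: "inj_on (senc A) ((\<lambda>bs. srun A (rev (rho bs @ replicate (length x + k) a))) ` {bs. length bs = M})"
    using assms(1) srun_in[OF assms(1)] unfolding wf_salg_def by (auto intro: inj_on_subset)
  obtain bs where bs: "length bs = M" "M \<le> length (senc A (srun A (rev (rho bs @ replicate (length x + k) a))))"
    using many_states[OF fixed_inj[OF assms(2,3)] inj2] by blast
  have "enat M \<le> enat (length (senc A (srun A (rev (rho bs @ replicate (length x + k) a)))))" using bs(2) by simp
  also have "\<dots> \<le> fixed_space A" unfolding fixed_space_def
    by (rule SUP_upper) (rule srun_in[OF assms(1)])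
  finally show ?thesis .
qed

end


section \<open>Upper bound\<close>

lemma lastn_len[simp]: "length (lastn a n w) = n"
  by (simp add: lastn_def)

lemma lastn_Nil: "lastn a n [] = replicate n a"
  by (simp add: lastn_def)

lemma lastn_snoc: "lastn a n (w@[c]) = tl (lastn a n w @ [c])"
proof (cases "n \<le> length w")
  case True
  show ?thesis
  proof (cases "n = 0")
    case True then show ?thesis by (simp add: lastn_def)
  next
    case False
    then have ne: "drop (length w - n) w \<noteq> []" using \<open>n \<le> length w\<close> by simp
    have "tl (drop (length w - n) w @ [c]) = tl (drop (length w - n) w) @ [c]"
      using ne by (cases "drop (length w - n) w") auto
    also have "\<dots> = drop (Suc (length w - n)) w @ [c]" by (simp add: drop_Suc tl_drop)
    finally show ?thesis using True False by (simp add: lastn_def Suc_diff_le)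
  qed
next
  case False
  show ?thesis
  proof (cases "n = Suc (length w)")
    case True then show ?thesis by (simp add: lastn_def)
  next
    case False
    then have "n - length w = Suc (n - Suc (length w))" using \<open>\<not> n \<le> length w\<close> by simp
    then show ?thesis using False \<open>\<not> n \<le> length w\<close> by (simp add: lastn_def)
  qed
qed

definition symcode :: "'a list \<Rightarrow> 'a \<Rightarrow> bool list" where
  "symcode xs c = map (\<lambda>y. y = c) xs"

definition wcode :: "'a list \<Rightarrow> 'a list \<Rightarrow> bool list" where
  "wcode xs w = concat (map (symcode xs) w)"

lemma wcode_len: "length (wcode xs w) = length w * length xs"
  by (induct w) (auto simp: wcode_def symcode_def)

lemma wcode_inj: assumes "set xs = UNIV"
  shows "length w1 = length w2 \<Longrightarrow> wcode xs w1 = wcode xs w2 \<Longrightarrow> w1 = w2"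
proof (induct w1 arbitrary: w2)
  case Nil then show ?case by simp
next
  case (Cons c w1)
  then obtain d w2' where w2: "w2 = d # w2'" by (cases w2) auto
  have "symcode xs c @ wcode xs w1 = symcode xs d @ wcode xs w2'"
    using Cons(3) w2 by (simp add: wcode_def)
  then have e: "symcode xs c = symcode xs d" "wcode xs w1 = wcode xs w2'"
    by (auto simp: symcode_def append_eq_append_conv)
  from e(1) have "c = d" unfolding symcode_def using assms
    by (metis (mono_tags, lifting) UNIV_I map_eq_conv)
  then show ?case using Cons e(2) w2 by simp
qed

definition win_alg :: "'a::countable \<Rightarrow> 'a list set \<Rightarrow> nat \<Rightarrow> 'a list \<Rightarrow> (nat,'a) salg" where
  "win_alg a L n xs = \<lparr> sstates = to_nat ` {w::'a list. length w = n}, sinit = to_nat (replicate n a),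
     strans = (\<lambda>s c. to_nat (tl (from_nat s @ [c]))), sacc = to_nat ` {w. length w = n \<and> w \<in> L},
     senc = (\<lambda>s. wcode xs (from_nat s)) \<rparr>"

lemma win_run: "srun (win_alg a L n xs) w = to_nat (lastn a n w)"
  by (induct w rule: rev_induct) (auto simp: srun_def win_alg_def lastn_Nil lastn_snoc)

lemma win_wf: assumes "set xs = UNIV" shows "wf_salg (win_alg a L n xs)"
  unfolding wf_salg_def
proof (intro conjI)
  show "inj_on (senc (win_alg a L n xs)) (sstates (win_alg a L n xs))"
    by (rule inj_onI) (auto simp: win_alg_def dest: wcode_inj[OF assms])
qed (auto simp: win_alg_def)

lemma win_lang: "slang (win_alg a L n xs) = {w. lastn a n w \<in> L}"
proof -
  have "to_nat (lastn a n w) \<in> to_nat ` {w. length w = n \<and> w \<in> L} \<longleftrightarrow> lastn a n w \<in> L" for w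
    by (auto dest: injD[OF inj_to_nat])
  moreover have "sacc (win_alg a L n xs) = to_nat ` {w. length w = n \<and> w \<in> L}"
    by (simp add: win_alg_def)
  ultimately show ?thesis unfolding slang_def win_run by auto
qed

lemma win_space: "fixed_space (win_alg a L n xs) \<le> enat (n * length xs)"
  unfolding fixed_space_def by (rule SUP_least) (auto simp: win_alg_def wcode_len)

lemma F_upper: fixes a :: "'a::finite"
  shows "\<exists>K. \<forall>n. F_fixed a L n \<le> enat (n * K)"
proof -
  obtain xs :: "'a list" where xs: "set xs = UNIV" using finite_list[of "UNIV::'a set"] by auto
  have "F_fixed a L n \<le> enat (n * length xs)" for n
    unfolding F_fixed_def
  proof (rule INF_lower2[of "win_alg a L n xs"])
    show "win_alg a L n xs \<in> {A. wf_salg A \<and> slang A = {w. lastn a n w \<in> L}}"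
      using win_wf[OF xs] win_lang[of a L n xs] by simp
  qed (rule win_space)
  then show ?thesis by blast
qed


lemma ereal_enat_trans: "ereal r \<le> ereal (real M) \<Longrightarrow> enat M \<le> e \<Longrightarrow> ereal r \<le> ereal_of_enat e"
proof -
  assume a: "ereal r \<le> ereal (real M)" and b: "enat M \<le> e"
  have "ereal_of_enat (enat M) \<le> ereal_of_enat e" using b by (simp only: ereal_of_enat_le_iff)
  moreover have "ereal_of_enat (enat M) = ereal (real M)" by simp
  ultimately show ?thesis using a by (metis order_trans)
qed

lemma aux_contra: "(r::real) = A + M/2 \<Longrightarrow> A \<le> X/2 \<Longrightarrow> X < M \<Longrightarrow> M \<le> r \<Longrightarrow> False"
  by linarith

theorem theorem5p3:
  fixes L :: "'a::finite list set" and B :: "('q,'a) dfa" and a :: 'a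
  assumes "regular L"
    and "wf_dfa B" and "dlang B = rev ` L"
    and "\<not> well_behaved B"
  shows "(\<exists>c>0. \<forall>\<^sub>F n in sequentially. ereal (c * real n) \<le> ereal_of_enat (V_var L n))
       \<and> (\<exists>c. \<forall>\<^sub>F n in sequentially. ereal_of_enat (F_fixed a L n) \<le> ereal (c * real n))
       \<and> \<not> (\<forall>c>0. \<forall>\<^sub>F n in sequentially. ereal_of_enat (F_fixed a L n) \<le> ereal (c * real n))"
proof -
  obtain x q al be k where d: "dstar B (dinit B) x = q" "dstar B q al = q" "dstar B q be = q"
     "length al = length be" "k \<le> length al" "0 < length al"
     "dstar B q (take k al) \<in> dfinal B" "dstar B q (take k be) \<notin> dfinal B"
    using not_wb_data[OF assms(4)] by blast
  define P where "P = length al"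
  interpret bl: blocks B L x q al be k P
    by unfold_locales (use d assms(3) in \<open>auto simp: P_def\<close>)
  have Ppos: "0 < P" using d P_def by simp
  have part1: "\<exists>c>0. \<forall>\<^sub>F n in sequentially. ereal (c * real n) \<le> ereal_of_enat (V_var L n)"
  proof (intro exI conjI)
    show "(0::real) < 1 / (2 * real P)" using Ppos by simp
    show "\<forall>\<^sub>F n in sequentially. ereal (1 / (2 * real P) * real n) \<le> ereal_of_enat (V_var L n)"
      unfolding eventually_sequentially
    proof (intro exI allI impI)
      fix n assume n: "2 * P \<le> n"
      define M where "M = n div P"
      have MP: "M * P \<le> n" by (simp add: M_def)
      have lt: "n < (M + 1) * P" using Ppos by (simp add: M_def) (metis add.commute div_mult_mod_eq mod_less_divisor mult.commute nat_add_left_cancel_less distrib_left mult_1_right)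
      have "real n < (real M + 1) * real P" using lt by (metis of_nat_1 of_nat_add of_nat_less_iff of_nat_mult)
      moreover have "2 * real P \<le> real n" using n by simp
      ultimately have "real n \<le> 2 * (real M * real P)" by (simp add: algebra_simps)
      then have "1 / (2 * real P) * real n \<le> real M" using Ppos
        by (simp add: field_simps)
      then have "ereal (1 / (2 * real P) * real n) \<le> ereal (real M)" by simp
      moreover have "enat M \<le> V_var L n" unfolding V_var_def
        by (rule INF_greatest) (use bl.var_bound MP in auto)
      ultimately show "ereal (1 / (2 * real P) * real n) \<le> ereal_of_enat (V_var L n)"
        by (rule ereal_enat_trans)
    qed
  qed
  have part2: "\<exists>c. \<forall>\<^sub>F n in sequentially. ereal_of_enat (F_fixed a L n) \<le> ereal (c * real n)"
  proof -
    obtain K where K: "\<And>n. F_fixed a L n \<le> enat (n * K)" using F_upper[of a L] by blast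
    have "ereal_of_enat (F_fixed a L n) \<le> ereal (real K * real n)" for n
    proof -
      have "ereal_of_enat (F_fixed a L n) \<le> ereal_of_enat (enat (n * K))"
        using K by (simp only: ereal_of_enat_le_iff)
      moreover have "ereal_of_enat (enat (n * K)) = ereal (real K * real n)" by simp
      ultimately show ?thesis by (simp add: mult.commute)
    qed
    then show ?thesis by (intro exI[of _ "real K"]) simp
  qed
  have part3: "\<not> (\<forall>c>0. \<forall>\<^sub>F n in sequentially. ereal_of_enat (F_fixed a L n) \<le> ereal (c * real n))"
  proof
    assume h: "\<forall>c>0. \<forall>\<^sub>F n in sequentially. ereal_of_enat (F_fixed a L n) \<le> ereal (c * real n)"
    have "(0::real) < 1 / (2 * real P)" using Ppos by simp
    then obtain N where N: "\<And>n. N \<le> n \<Longrightarrow> ereal_of_enat (F_fixed a L n) \<le> ereal (1 / (2 * real P) * real n)"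
      using h unfolding eventually_sequentially by blast
    define M where "M = N + length x + k + 1"
    define n where "n = length x + k + M * P"
    have "M \<le> M * P" using Ppos by simp
    then have Nn: "N \<le> n" by (simp add: n_def M_def)
    have "enat M \<le> F_fixed a L n" unfolding F_fixed_def
      by (rule INF_greatest) (use bl.fixed_bound n_def in auto)
    then have "ereal (real M) \<le> ereal_of_enat (F_fixed a L n)"
      using ereal_enat_trans[of "real M" M] by simp
    also have "\<dots> \<le> ereal (1 / (2 * real P) * real n)" using N[OF Nn] .
    finally have le: "real M \<le> 1 / (2 * real P) * real n" by simp
    have "1 / (2 * real P) * real n = (real (length x + k)) / (2 * real P) + real M / 2"
      using Ppos by (simp add: n_def field_simps)
    moreover have "real (length x + k) / (2 * real P) \<le> real (length x + k) / 2"
      using Ppos by (intro divide_left_mono) auto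
    moreover have "real (length x + k) < real M" by (simp add: M_def)
    ultimately show False using le aux_contra by blast
  qed
  show ?thesis using part1 part2 part3 by blast
qed

end
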